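(* Assume the setting below (in particular $\gcd(a,d)=1$), and let $(x_0,y_0)\in L$ be the point with $\varphi(x_0,y_0)=g(\mathcal{S})+a$. If $(x_0,y_0)=(s_v-s_{v+1}-1,\,P_{v+1}-1)$, then (a1) $\varphi(x,y)+\varphi(x_0-x,y_0-y)\equiv\varphi(x_0,y_0)\pmod a$ for all integers $0\le x\le x_0$, $0\le y\le y_0$; (a2) $\varphi(x,y)+\varphi(x_0+s_v-x,\,y_0-P_v-y)\equiv\varphi(x_0,y_0)\pmod a$ for all integers $x_0<x\le s_v-1$, $0\le y\le y_0-P_v$. If $(x_0,y_0)=(s_v-1,\,P_{v+1}-P_v-1)$, then (b1) $\varphi(x,y)+\varphi(x_0-x,y_0-y)\equiv\varphi(x_0,y_0)\pmod a$ for all integers $0\le x\le x_0$, $0\le y\le y_0$; (b2) $\varphi(x,y)+\varphi(x_0-s_{v+1}-x,\,y_0+P_{v+1}-y)\equiv\varphi(x_0,y_0)\pmod a$ for all integers $0\le x\le x_0-s_{v+1}$, $y_0<y\le y_0+P_{v+1}$.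
   Context: Setting (AA-semigroups). Let $a,d,k,c$ be positive integers with $\gcd(a,a+d,\ldots,a+kd,c)=1$ and $\gcd(a,d)=1$, and let $\mathcal{S}=\langle a,a+d,\ldots,a+kd,c\rangle$ be the numerical semigroup of non-negative integer combinations of these generators; $g(\mathcal{S})$ is its Frobenius number (largest integer not in $\mathcal{S}$). Put $s_{-1}=a$ and let $s_0$ be the unique integer with $ds_0\equiv c\pmod a$, $0\le s_0<a$. If $s_0=0$ set $m=-1$. Otherwise define $q_{i+1},s_{i+1}$ for $i=0,1,2,\ldots$ by $s_{i-1}=q_{i+1}s_i-s_{i+1}$ with $0\le s_{i+1}<s_i$, and let $m$ be the index with $s_m>0=s_{m+1}$ (so $s_m=\gcd(a,c)$). Define $P_{-1}=0$, $P_0=1$, $P_{i+1}=q_{i+1}P_i-P_{i-1}$ for $i=0,\ldots,m$, and $R_i=\frac1a\big((a+kd)s_i-kcP_i\big)$ for $-1\le i\le m+1$; these are integers with $-c/s_m=R_{m+1}<R_m<\cdots<R_0<R_{-1}=a+kd$. Let $v$ be the unique integer with $R_{v+1}\le0<R_v$. Let $L=A\cup B$, where $A=\{(x,y)\in\mathbb{Z}^2:0\le x\le s_v-1,\ 0\le y\le P_{v+1}-P_v-1\}$ and $B=\{(x,y)\in\mathbb{Z}^2:0\le x\le s_v-s_{v+1}-1,\ P_{v+1}-P_v\le y\le P_{v+1}-1\}$. Define $\varphi:\mathbb{Z}^2\to\mathbb{Z}$, $\varphi(x,y)=\lceil x/k\rceil a+xd+yc$. It is known (Rødseth) that $|L|=a$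 and $\varphi$ maps $L$ bijectively onto $\mathrm{Ap}(\mathcal{S};a)=\{s\in\mathcal{S}:s-a\notin\mathcal{S}\}$; consequently $g(\mathcal{S})+a=\max\varphi(L)$ is attained at $(s_v-s_{v+1}-1,P_{v+1}-1)$ or at $(s_v-1,P_{v+1}-P_v-1)$. *)

theory Defs
  imports "HOL-Number_Theory.Number_Theory"
begin

definition AAsg :: "int \<Rightarrow> int \<Rightarrow> int \<Rightarrow> int \<Rightarrow> int set" where
  "AAsg a d k c = {n. \<exists>u :: int \<Rightarrow> int. \<exists>w :: int.
      (\<forall>j. u j \<ge> 0) \<and> w \<ge> 0 \<and> n = (\<Sum>j\<in>{0..k}. u j * (a + j * d)) + w * c}"

definition frob :: "int set \<Rightarrow> int" where
  "frob S = (GREATEST n. n \<notin> S)"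

definition s0 :: "int \<Rightarrow> int \<Rightarrow> int \<Rightarrow> int" where
  "s0 a d c = (THE s. 0 \<le> s \<and> s < a \<and> [d * s = c] (mod a))"

text \<open>Shifted index: sS a d c j = s_(j-1); so sS 0 = s_(-1) = a, sS 1 = s_0.
  The recursion s_(i-1) = q_(i+1) s_i - s_(i+1), 0 <= s_(i+1) < s_i gives
  s_(i+1) = (- s_(i-1)) mod s_i (and we stop at 0).\<close>
fun sS :: "int \<Rightarrow> int \<Rightarrow> int \<Rightarrow> nat \<Rightarrow> int" where
  "sS a d c 0 = a"
| "sS a d c (Suc 0) = s0 a d c"
| "sS a d c (Suc (Suc n)) =
     (if sS a d c (Suc n) = 0 then 0 else (- sS a d c n) mod sS a d c (Suc n))"

text \<open>qS a d c i = q_(i+1) = ceiling (s_(i-1) / s_i).\<close>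
definition qS :: "int \<Rightarrow> int \<Rightarrow> int \<Rightarrow> nat \<Rightarrow> int" where
  "qS a d c i = \<lceil>real_of_int (sS a d c i) / real_of_int (sS a d c (Suc i))\<rceil>"

text \<open>Shifted index: PP a d c j = P_(j-1); P_(-1) = 0, P_0 = 1,
  P_(i+1) = q_(i+1) P_i - P_(i-1).\<close>
fun PP :: "int \<Rightarrow> int \<Rightarrow> int \<Rightarrow> nat \<Rightarrow> int" where
  "PP a d c 0 = 0"
| "PP a d c (Suc 0) = 1"
| "PP a d c (Suc (Suc n)) = qS a d c n * PP a d c (Suc n) - PP a d c n"

text \<open>Shifted index: RR a d k c j = R_(j-1) = ((a+kd) s_(j-1) - k c P_(j-1)) / a
  (an exact division).\<close>
definition RR :: "int \<Rightarrow> int \<Rightarrow> int \<Rightarrow> int \<Rightarrow> nat \<Rightarrow> int" where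
  "RR a d k c j = ((a + k * d) * sS a d c j - k * c * PP a d c j) div a"

text \<open>NN = (m+1)+1, the shifted index of s_(m+1) = 0 (first zero term after s_(-1)).\<close>
definition NN :: "int \<Rightarrow> int \<Rightarrow> int \<Rightarrow> nat" where
  "NN a d c = (LEAST j. 0 < j \<and> sS a d c j = 0)"

text \<open>vS = v+1, where v in {-1..m} is the unique index with R_(v+1) <= 0 < R_v.\<close>
definition vS :: "int \<Rightarrow> int \<Rightarrow> int \<Rightarrow> int \<Rightarrow> nat" where
  "vS a d k c = (THE w. w < NN a d c \<and> RR a d k c (Suc w) \<le> 0 \<and> 0 < RR a d k c w)"

definition phi :: "int \<Rightarrow> int \<Rightarrow> int \<Rightarrow> int \<Rightarrow> int \<Rightarrow> int \<Rightarrow> int" where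
  "phi a d k c x y = \<lceil>real_of_int x / real_of_int k\<rceil> * a + x * d + y * c"

definition Lset :: "int \<Rightarrow> int \<Rightarrow> int \<Rightarrow> int \<Rightarrow> (int \<times> int) set" where
  "Lset a d k c =
    (let w = vS a d k c; sv = sS a d c w; sv1 = sS a d c (Suc w);
         Pv = PP a d c w; Pv1 = PP a d c (Suc w) in
     {(x, y). 0 \<le> x \<and> x \<le> sv - 1 \<and> 0 \<le> y \<and> y \<le> Pv1 - Pv - 1}
     \<union> {(x, y). 0 \<le> x \<and> x \<le> sv - sv1 - 1 \<and> Pv1 - Pv \<le> y \<and> y \<le> Pv1 - 1})"

end

theory Submission
  imports Defs
begin


lemma s0_prop:
  fixes a d c :: int
  assumes "0 < a" "gcd a d = 1"
  shows "0 \<le> s0 a d c \<and> s0 a d c < a \<and> [d * s0 a d c = c] (mod a)"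
proof -
  have cop: "coprime d a" using assms(2) by (simp add: coprime_iff_gcd_eq_1 gcd.commute)
  obtain u where u: "[d * u = 1] (mod a)" using cong_solve_coprime_int[OF cop] by blast
  define s where "s = (u * c) mod a"
  have ex: "0 \<le> s \<and> s < a \<and> [d * s = c] (mod a)"
  proof -
    have "[d * s = d * (u * c)] (mod a)" unfolding s_def
      by (simp add: cong_def mod_mult_right_eq)
    moreover have "[d * (u * c) = 1 * c] (mod a)"
      using cong_mult[OF u cong_refl[of c]] by (simp add: mult.assoc)
    ultimately have "[d * s = c] (mod a)" using cong_trans by force
    thus ?thesis using assms(1) by (simp add: s_def)
  qed
  have uq: "t = s" if "0 \<le> t \<and> t < a \<and> [d * t = c] (mod a)" for t
  proof -
    have "[d * t = d * s] (mod a)" using that ex by (meson cong_sym cong_trans)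
    hence "[t = s] (mod a)" using cop cong_mult_lcancel by blast
    thus ?thesis using that ex cong_less_imp_eq_int by blast
  qed
  have "s0 a d c = s" unfolding s0_def
    apply (rule the_equality)
     apply (rule ex)
    apply (erule uq)
    done
  thus ?thesis using ex by simp
qed

lemma sS_nonneg:
  assumes "0 < a" "gcd a d = 1"
  shows "0 \<le> sS a d c n"
proof (induction n rule: nat_less_induct)
  case (1 n)
  show ?case
  proof (cases n)
    case 0 then show ?thesis using assms by simp
  next
    case (Suc m)
    then show ?thesis
    proof (cases m)
      case 0 then show ?thesis using Suc s0_prop[OF assms, of c] by simp
    next
      case (Suc k)
      have "0 \<le> sS a d c (Suc k)" using 1 \<open>n = Suc m\<close> Suc by simp
      then show ?thesis using \<open>n = Suc m\<close> Suc by auto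
    qed
  qed
qed

lemma sS_zero_next:
  assumes "0 < a" "sS a d c (Suc n) \<noteq> 0"
  shows "sS a d c n \<noteq> 0"
proof (cases n)
  case 0 then show ?thesis using assms by simp
next
  case (Suc m) then show ?thesis using assms by auto
qed

lemma neg_mod_eq:
  fixes x y :: int
  assumes "0 < y"
  shows "(- x) mod y = \<lceil>real_of_int x / real_of_int y\<rceil> * y - x"
proof -
  have c: "\<lceil>real_of_int x / real_of_int y\<rceil> = - ((- x) div y)"
  proof -
    have "\<lceil>real_of_int x / real_of_int y\<rceil> = - \<lfloor>real_of_int (-x) / real_of_int y\<rfloor>"
      by (simp add: ceiling_def)
    thus ?thesis by (simp only: floor_divide_of_int_eq)
  qed
  have m: "(- x) mod y = - x - ((- x) div y) * y" using div_mult_mod_eq[of "-x" y] by linarith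
  show ?thesis unfolding c m by (simp add: algebra_simps)
qed

lemma inv_lemma:
  assumes "0 < a" "gcd a d = 1"
  shows "sS a d c n \<noteq> 0 \<Longrightarrow> [d * sS a d c n = c * PP a d c n] (mod a)
            \<and> [d * sS a d c (Suc n) = c * PP a d c (Suc n)] (mod a)"
proof (induction n)
  case 0
  then show ?case using s0_prop[OF assms, of c] by (simp add: cong_def)
next
  case (Suc n)
  have nz: "sS a d c n \<noteq> 0" using sS_zero_next[OF assms(1) Suc.prems] .
  from Suc.IH[OF nz] have i0: "[d * sS a d c n = c * PP a d c n] (mod a)"
    and i1: "[d * sS a d c (Suc n) = c * PP a d c (Suc n)] (mod a)" by auto
  have pos: "0 < sS a d c (Suc n)" using Suc.prems sS_nonneg[OF assms, of c "Suc n"] by linarith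
  have e: "sS a d c (Suc (Suc n)) = qS a d c n * sS a d c (Suc n) - sS a d c n"
    using Suc.prems neg_mod_eq[OF pos, of "sS a d c n"] by (simp add: qS_def)
  have "[qS a d c n * (d * sS a d c (Suc n)) - d * sS a d c n
        = qS a d c n * (c * PP a d c (Suc n)) - c * PP a d c n] (mod a)"
    by (intro cong_diff cong_mult cong_refl i0 i1)
  moreover have e1: "d * sS a d c (Suc (Suc n)) = qS a d c n * (d * sS a d c (Suc n)) - d * sS a d c n"
    unfolding e by (simp add: algebra_simps)
  moreover have e2: "c * PP a d c (Suc (Suc n)) = qS a d c n * (c * PP a d c (Suc n)) - c * PP a d c n"
    by (simp add: algebra_simps)
  ultimately have "[d * sS a d c (Suc (Suc n)) = c * PP a d c (Suc (Suc n))] (mod a)"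
    by simp
  with i1 show ?case by simp
qed

lemma phi_cong:
  assumes "0 < a"
  shows "[phi a d k c x y = x * d + y * c] (mod a)"
  unfolding phi_def cong_def by (simp add: add.assoc)

lemma phi_sum:
  assumes "0 < a" "[e * d = f * c] (mod a)"
  shows "[phi a d k c x y + phi a d k c (x0 + e - x) (y0 - f - y) = phi a d k c x0 y0] (mod a)"
proof -
  have "[phi a d k c x y + phi a d k c (x0 + e - x) (y0 - f - y)
       = x * d + y * c + ((x0 + e - x) * d + (y0 - f - y) * c)] (mod a)"
    by (intro cong_add phi_cong assms(1))
  moreover have "x * d + y * c + ((x0 + e - x) * d + (y0 - f - y) * c)
      = (x0 * d + y0 * c) + (e * d - f * c)" by (simp add: algebra_simps)
  moreover have "[(x0 * d + y0 * c) + (e * d - f * c) = (x0 * d + y0 * c) + 0] (mod a)"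
    using assms(2) by (intro cong_add cong_refl) (simp add: cong_diff_iff_cong_0)
  moreover have "[x0 * d + y0 * c = phi a d k c x0 y0] (mod a)"
    using phi_cong[OF assms(1)] cong_sym by blast
  ultimately show ?thesis by (metis add_0_right cong_trans)
qed

theorem lemma4:
  fixes a d k c x0 y0 :: int
  assumes pos: "0 < a" "0 < d" "0 < k" "0 < c"
    and gcd_all: "Gcd ({a + j * d | j. 0 \<le> j \<and> j \<le> k} \<union> {c}) = 1"
    and gcd_ad: "gcd a d = 1"
    and inL: "(x0, y0) \<in> Lset a d k c"
    and frob: "phi a d k c x0 y0 = frob (AAsg a d k c) + a"
  shows
   "(let w = vS a d k c; sv = sS a d c w; sv1 = sS a d c (Suc w);
         Pv = PP a d c w; Pv1 = PP a d c (Suc w) in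
     ((x0, y0) = (sv - sv1 - 1, Pv1 - 1) \<longrightarrow>
        (\<forall>x y. 0 \<le> x \<and> x \<le> x0 \<and> 0 \<le> y \<and> y \<le> y0 \<longrightarrow>
           [phi a d k c x y + phi a d k c (x0 - x) (y0 - y) = phi a d k c x0 y0] (mod a))
      \<and> (\<forall>x y. x0 < x \<and> x \<le> sv - 1 \<and> 0 \<le> y \<and> y \<le> y0 - Pv \<longrightarrow>
           [phi a d k c x y + phi a d k c (x0 + sv - x) (y0 - Pv - y) = phi a d k c x0 y0] (mod a)))
   \<and> ((x0, y0) = (sv - 1, Pv1 - Pv - 1) \<longrightarrow>
        (\<forall>x y. 0 \<le> x \<and> x \<le> x0 \<and> 0 \<le> y \<and> y \<le> y0 \<longrightarrow>
           [phi a d k c x y + phi a d k c (x0 - x) (y0 - y) = phi a d k c x0 y0] (mod a))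
      \<and> (\<forall>x y. 0 \<le> x \<and> x \<le> x0 - sv1 \<and> y0 < y \<and> y \<le> y0 + Pv1 \<longrightarrow>
           [phi a d k c x y + phi a d k c (x0 - sv1 - x) (y0 + Pv1 - y) = phi a d k c x0 y0] (mod a))))"
proof -
  define w where "w = vS a d k c"
  define sv where "sv = sS a d c w"
  define sv1 where "sv1 = sS a d c (Suc w)"
  define Pv where "Pv = PP a d c w"
  define Pv1 where "Pv1 = PP a d c (Suc w)"
  have a0: "0 < a" using pos by simp
  have sv1nn: "0 \<le> sv1" unfolding sv1_def using sS_nonneg[OF a0 gcd_ad] .
  have triv: "[phi a d k c x y + phi a d k c (x0 - x) (y0 - y) = phi a d k c x0 y0] (mod a)" for x y
    using phi_sum[OF a0, of 0 d 0 c k x y x0 y0] by simp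
  have A2: "[phi a d k c x y + phi a d k c (x0 + sv - x) (y0 - Pv - y) = phi a d k c x0 y0] (mod a)"
    if "x0 = sv - sv1 - 1" "x0 < x" "x \<le> sv - 1" for x y
  proof -
    have "sS a d c (Suc w) \<noteq> 0" using that sv1_def by linarith
    hence "sS a d c w \<noteq> 0" using sS_zero_next[OF a0] by blast
    hence "[d * sv = c * Pv] (mod a)" using inv_lemma[OF a0 gcd_ad] sv_def Pv_def by blast
    hence "[sv * d = Pv * c] (mod a)" by (simp add: mult.commute)
    thus ?thesis by (rule phi_sum[OF a0])
  qed
  have B2: "[phi a d k c x y + phi a d k c (x0 - sv1 - x) (y0 + Pv1 - y) = phi a d k c x0 y0] (mod a)"
    if "x0 = sv - 1" "0 \<le> x" "x \<le> x0 - sv1" for x y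
  proof -
    have "sS a d c w \<noteq> 0" using that sv_def sv1nn by linarith
    hence "[d * sv1 = c * Pv1] (mod a)" using inv_lemma[OF a0 gcd_ad] sv1_def Pv1_def by blast
    hence "[(- sv1) * d = (- Pv1) * c] (mod a)" by (simp add: mult.commute cong_minus_minus_iff)
    from phi_sum[OF a0 this, of k x y x0 y0] show ?thesis by simp
  qed
  show ?thesis
    unfolding Let_def w_def[symmetric] sv_def[symmetric] sv1_def[symmetric] Pv_def[symmetric] Pv1_def[symmetric]
    using triv A2 B2 by auto
qed

end
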